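(* Let $p$ and $q$ be distinct primes, $n=pq$, and let $e$ be a positive integer with $\gcd(e,\varphi(n))=1$ (so that there is an integer $d$ with $ed\equiv 1 \pmod{\varphi(n)}$). For a positive integer $k$, let $$T_{n,e,k}=\{x\in \mathbb{Z}_n^{\ast} : x^{e^{k}}\equiv x \pmod n \text{ and } x^{e^{m}}\not\equiv x \pmod n \text{ for every positive integer } m<k\}.$$ Then $$|T_{n,e,k}|=\sum_{d\mid k}\mu(k/d)\,\gcd(e^{d}-1,p-1)\,\gcd(e^{d}-1,q-1),$$ where the sum runs over the positive divisors $d$ of $k$ and $\mu$ is the Möbius function.
   Context: $\mathbb{Z}_n^{\ast}$ denotes a reduced residue system modulo $n$ (the residues coprime to $n$), $\varphi$ is Euler's totient function, and $\gcd(a,b)$ is the greatest common divisor (with $\gcd(0,b)=b$). *)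

theory Defs
  imports "HOL-Number_Theory.Number_Theory" "HOL-Computational_Algebra.Squarefree"
begin

definition moebius_mu :: "nat \<Rightarrow> int" where
  "moebius_mu n = (if n = 0 \<or> \<not> squarefree n then 0 else (-1) ^ card (prime_factors n))"

definition T_set :: "nat \<Rightarrow> nat \<Rightarrow> nat \<Rightarrow> nat set" where
  "T_set n e k = {x \<in> {0..<n}. coprime x n \<and> [x ^ (e ^ k) = x] (mod n) \<and>
      (\<forall>m. 0 < m \<and> m < k \<longrightarrow> \<not> [x ^ (e ^ m) = x] (mod n))}"

end

theory Submission
  imports Defs "HOL-Number_Theory.Residue_Primitive_Roots"
begin


lemma mu_1: "moebius_mu 1 = 1"
  by (simp add: moebius_mu_def)

lemma mu_mult_prime:
  assumes p: "prime p" and t: "t > 0" "\<not> p dvd t"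
  shows "moebius_mu (p*t) = - moebius_mu t"
proof -
  have cop: "coprime p t" using p t by (simp add: prime_imp_coprime)
  have sq: "squarefree (p*t) \<longleftrightarrow> squarefree t"
  proof
    assume "squarefree (p*t)" then show "squarefree t" by (rule squarefree_multD(2))
  next
    assume "squarefree t"
    moreover have "squarefree p" using p by (rule squarefree_prime)
    ultimately show "squarefree (p*t)" using cop by (simp add: squarefree_mult_coprime)
  qed
  have pf: "prime_factors (p*t) = insert p (prime_factors t)"
    using p t by (simp add: prime_factors_product prime_prime_factors)
  have "p \<notin> prime_factors t" using t by auto
  then have ce: "card (prime_factors (p*t)) = Suc (card (prime_factors t))"
    using pf by simp
  have pt0: "p*t \<noteq> 0" and t0: "t \<noteq> 0" using p t by auto
  show ?thesis
  proof (cases "squarefree t")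
    case True
    then show ?thesis unfolding moebius_mu_def using sq pt0 t0 ce by simp
  next
    case False
    then show ?thesis unfolding moebius_mu_def using sq by simp
  qed
qed

lemma mu_mult_prime0:
  assumes p: "prime p" and t: "p dvd t"
  shows "moebius_mu (p*t) = 0"
proof -
  have "p ^ 2 dvd p * t" using t by (simp add: power2_eq_square)
  moreover have "\<not> p dvd 1" using p not_prime_unit by blast
  ultimately have "\<not> squarefree (p*t)" by (rule not_squarefreeI)
  then show ?thesis by (simp add: moebius_mu_def)
qed

lemma mu_sum:
  assumes "m > 0"
  shows "(\<Sum>s | s dvd m. moebius_mu s) = (if m = 1 then 1 else 0)"
proof (cases "m = 1")
  case True then show ?thesis using mu_1 by simp
next
  case False
  then obtain p where p: "prime p" "p dvd m" using assms prime_factor_nat by blast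
  define m' where "m' = m div p"
  have m: "m = p * m'" using p m'_def by simp
  have m'0: "m' > 0" using assms m by (auto intro: Nat.gr0I)
  define A where "A = {s. s dvd m'  \<and> \<not> p dvd s}"
  have fin: "finite {s. s dvd m}" using assms by simp
  have fin': "finite {s. s dvd m'}" using m'0 by simp
  have split: "{s. s dvd m} = {s. s dvd m \<and> \<not> p dvd s} \<union> {s. s dvd m \<and> p dvd s}" by auto
  have "(\<Sum>s | s dvd m. moebius_mu s) =
      (\<Sum>s | s dvd m \<and> \<not> p dvd s. moebius_mu s) + (\<Sum>s | s dvd m \<and> p dvd s. moebius_mu s)"
    by (subst split, rule sum.union_disjoint) (use fin in auto)
  also have "{s. s dvd m \<and> \<not> p dvd s} = A"
  proof -
    have "s dvd m'" if "s dvd m" "\<not> p dvd s" for s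
    proof -
      have "coprime s p" using that p by (simp add: prime_imp_coprime coprime_commute)
      then show ?thesis using that m by (metis coprime_dvd_mult_right_iff)
    qed
    then show ?thesis unfolding A_def m by auto
  qed
  also have "(\<Sum>s | s dvd m \<and> p dvd s. moebius_mu s) = (\<Sum>t | t dvd m'. moebius_mu (p*t))"
    by (rule sum.reindex_bij_witness[of _ "\<lambda>t. p*t" "\<lambda>s. s div p"])
       (use p in \<open>auto simp: m prime_gt_0_nat dvd_div_iff_mult elim!: dvdE\<close>)
  also have "\<dots> = (\<Sum>t\<in>A. moebius_mu (p*t)) + (\<Sum>t | t dvd m' \<and> p dvd t. moebius_mu (p*t))"
  proof -
    define B where "B = {t. t dvd m' \<and> p dvd t}"
    have e: "{t. t dvd m'} = A \<union> B" by (auto simp: A_def B_def)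
    have fA: "finite A" by (rule finite_subset[OF _ fin']) (auto simp: A_def)
    have fB: "finite B" by (rule finite_subset[OF _ fin']) (auto simp: B_def)
    have dj: "A \<inter> B = {}" by (auto simp: A_def B_def)
    have "(\<Sum>t\<in>A \<union> B. moebius_mu (p*t)) = (\<Sum>t\<in>A. moebius_mu (p*t)) + (\<Sum>t\<in>B. moebius_mu (p*t))"
      by (rule sum.union_disjoint[OF fA fB dj])
    then show ?thesis unfolding e B_def .
  qed
  also have "(\<Sum>t | t dvd m' \<and> p dvd t. moebius_mu (p*t)) = 0"
    by (rule sum.neutral) (use p mu_mult_prime0 in auto)
  also have "(\<Sum>t\<in>A. moebius_mu (p*t)) = (\<Sum>t\<in>A. - moebius_mu t)"
    by (rule sum.cong) (use p m'0 mu_mult_prime in \<open>auto simp: A_def intro: Nat.gr0I\<close>)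
  finally show ?thesis using False by (simp add: sum_negf)
qed

lemma mu_sum_div:
  assumes "m > 0"
  shows "(\<Sum>s | s dvd m. moebius_mu (m div s)) = (if m = 1 then 1 else 0)"
proof -
  have "(\<Sum>s | s dvd m. moebius_mu (m div s)) = (\<Sum>s | s dvd m. moebius_mu s)"
    by (rule sum.reindex_bij_witness[of _ "\<lambda>s. m div s" "\<lambda>s. m div s"])
       (use assms in \<open>auto simp: dvd_div_eq_mult div_div_eq_right elim!: dvdE intro: Nat.gr0I\<close>)
  then show ?thesis using mu_sum[OF assms] by simp
qed

lemma mu_inner:
  assumes k: "k > 0" and r: "r dvd k"
  shows "(\<Sum>d | d dvd k \<and> r dvd d. moebius_mu (k div d)) = (if r = k then 1 else 0)"
proof -
  obtain m where m: "k = r * m" using r by (auto elim: dvdE)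
  have r0: "r > 0" and m0: "m > 0" using k m by (auto intro: Nat.gr0I)
  have "(\<Sum>d | d dvd k \<and> r dvd d. moebius_mu (k div d)) = (\<Sum>s | s dvd m. moebius_mu (m div s))"
    by (rule sum.reindex_bij_witness[of _ "\<lambda>s. r * s" "\<lambda>d. d div r"])
       (use r0 m0 in \<open>auto simp: m elim!: dvdE\<close>)
  also have "\<dots> = (if m = 1 then 1 else 0)" using mu_sum_div[OF m0] .
  also have "(m = 1) = (r = k)" using m r0 by auto
  finally show ?thesis .
qed

lemma mobius_inversion:
  fixes g F :: "nat \<Rightarrow> int"
  assumes F: "\<And>d. d > 0 \<Longrightarrow> F d = (\<Sum>r | r dvd d. g r)" and k: "k > 0"
  shows "(\<Sum>d | d dvd k. moebius_mu (k div d) * F d) = g k"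
proof -
  have fk: "finite {d. d dvd k}" using k by simp
  have "(\<Sum>d | d dvd k. moebius_mu (k div d) * F d) =
        (\<Sum>d | d dvd k. \<Sum>r \<in> {r \<in> {r. r dvd k}. r dvd d}. moebius_mu (k div d) * g r)"
  proof (rule sum.cong)
    fix d assume d: "d \<in> {d. d dvd k}"
    then have d0: "d > 0" using k by (auto intro: Nat.gr0I)
    have "{r \<in> {r. r dvd k}. r dvd d} = {r. r dvd d}" using d by (auto intro: dvd_trans)
    then show "moebius_mu (k div d) * F d = (\<Sum>r \<in> {r \<in> {r. r dvd k}. r dvd d}. moebius_mu (k div d) * g r)"
      by (simp add: F[OF d0] sum_distrib_left)
  qed simp
  also have "\<dots> = (\<Sum>r | r dvd k. \<Sum>d | d \<in> {d. d dvd k} \<and> r dvd d. moebius_mu (k div d) * g r)"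
    by (rule sum.swap_restrict) (use fk in auto)
  also have "\<dots> = (\<Sum>r | r dvd k. if r = k then g r else 0)"
  proof (rule sum.cong)
    fix r assume r: "r \<in> {r. r dvd k}"
    have "(\<Sum>d | d \<in> {d. d dvd k} \<and> r dvd d. moebius_mu (k div d) * g r) =
          (\<Sum>d | d dvd k \<and> r dvd d. moebius_mu (k div d)) * g r"
      by (simp add: sum_distrib_right)
    also have "\<dots> = (if r = k then g r else 0)" using mu_inner[OF k] r by simp
    finally show "(\<Sum>d | d \<in> {d. d dvd k} \<and> r dvd d. moebius_mu (k div d) * g r) = (if r = k then g r else 0)" .
  qed simp
  also have "\<dots> = g k" using fk by (simp add: sum.delta)
  finally show ?thesis .
qed



lemma prime_count:
  assumes p: "prime p" and N: "N > 0"
  shows "card {y \<in> {0..<p}. coprime y p \<and> [y^N = y] (mod p)} = gcd (N-1) (p-1)"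
proof -
  define G where "G = gcd (N-1) (p-1)"
  have p1: "p > 1" using p prime_gt_1_nat by blast
  have G0: "G > 0" using p1 by (simp add: G_def)
  obtain M where M: "N = Suc M" using N gr0_implies_Suc by blast
  have key: "[y^N = y] (mod p) \<longleftrightarrow> ord p y dvd G" if y: "coprime y p" for y
  proof -
    have "y^N = y^(N-1) * y" by (simp add: M mult.commute)
    then have "[y^N = y] (mod p) \<longleftrightarrow> [y^(N-1) * y = 1 * y] (mod p)" by simp
    also have "\<dots> \<longleftrightarrow> [y^(N-1) = 1] (mod p)" using y by (rule cong_mult_rcancel_nat)
    also have "\<dots> \<longleftrightarrow> ord p y dvd (N-1)" by (rule ord_divides)
    also have "\<dots> \<longleftrightarrow> ord p y dvd G"
    proof -
      have "coprime p y" using y by (simp add: coprime_commute)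
      then have "ord p y dvd totient p" by (rule order_divides_totient)
      then have "ord p y dvd (p-1)" using p by (simp add: totient_prime)
      then show ?thesis unfolding G_def using gcd_greatest_iff by blast
    qed
    finally show ?thesis .
  qed
  have tot: "y \<in> totatives p \<longleftrightarrow> y \<in> {0..<p} \<and> coprime y p" for y
  proof -
    have "coprime y p \<Longrightarrow> y \<noteq> 0" using p1 by (cases "y = 0") auto
    moreover have "coprime y p \<Longrightarrow> y \<noteq> p" using p1 by auto
    ultimately show ?thesis unfolding totatives_def by auto
  qed
  have "{y \<in> {0..<p}. coprime y p \<and> [y^N = y] (mod p)} =
        (\<Union>d\<in>{d. d dvd G}. {x \<in> totatives p. ord p x = d})"
    using key tot by blast
  also have "card \<dots> = (\<Sum>d | d dvd G. card {x \<in> totatives p. ord p x = d})"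
  proof (rule card_UN_disjoint)
    show "finite {d. d dvd G}" using G0 by simp
    show "\<forall>i\<in>{d. d dvd G}. finite {x \<in> totatives p. ord p x = i}" by simp
    show "\<forall>i\<in>{d. d dvd G}. \<forall>j\<in>{d. d dvd G}. i \<noteq> j \<longrightarrow>
      {x \<in> totatives p. ord p x = i} \<inter> {x \<in> totatives p. ord p x = j} = {}" by blast
  qed
  also have "\<dots> = (\<Sum>d | d dvd G. totient d)"
  proof (rule sum.cong)
    fix d assume "d \<in> {d. d dvd G}"
    then have "d dvd p - 1" unfolding G_def using dvd_trans gcd_dvd2 by blast
    then show "card {x \<in> totatives p. ord p x = d} = totient d"
      using prime_card_elements_with_ord_eq_totient[OF p1 p] by simp
  qed simp
  also have "\<dots> = G" by (rule totient_divisor_sum)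
  finally show ?thesis by (simp add: G_def)
qed

lemma cong_mod_iff: "[(x mod p)^N = x mod p] (mod p) \<longleftrightarrow> [(x::nat)^N = x] (mod (p::nat))"
  by (simp add: cong_def power_mod)

lemma cong_mod_iff2: "[(x mod p)^N = x] (mod p) \<longleftrightarrow> [(x::nat)^N = x] (mod (p::nat))"
  by (simp add: cong_def power_mod)

lemma crt_count:
  fixes p q n N :: nat
  assumes p: "prime p" and q: "prime q" and pq: "p \<noteq> q" and n: "n = p * q"
  shows "card {x \<in> {0..<n}. coprime x n \<and> [x^N = x] (mod n)} =
         card {y \<in> {0..<p}. coprime y p \<and> [y^N = y] (mod p)} *
         card {y \<in> {0..<q}. coprime y q \<and> [y^N = y] (mod q)}"
proof -
  define f where "f x = (x mod p, x mod q)" for x :: nat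
  define Sp where "Sp = {y \<in> {0..<p}. coprime y p \<and> [y^N = y] (mod p)}"
  define Sq where "Sq = {y \<in> {0..<q}. coprime y q \<and> [y^N = y] (mod q)}"
  define Sn where "Sn = {x \<in> {0..<n}. coprime x n \<and> [x^N = x] (mod n)}"
  have cop: "coprime p q" using p q pq by (simp add: primes_coprime)
  have p0: "p > 0" and q0: "q > 0" using p q prime_gt_0_nat by auto
  have inj: "inj_on f {0..<n}"
  proof (rule inj_onI)
    fix x y assume x: "x \<in> {0..<n}" and y: "y \<in> {0..<n}" and e: "f x = f y"
    then have "[x = y] (mod p)" "[x = y] (mod q)" by (auto simp: f_def cong_def)
    then have "[x = y] (mod n)" using cop n by (simp add: coprime_cong_mult_nat)
    then show "x = y" using x y by (simp add: cong_def)
  qed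
  have img: "f ` {0..<n} = {0..<p} \<times> {0..<q}"
  proof (rule card_subset_eq)
    show "f ` {0..<n} \<subseteq> {0..<p} \<times> {0..<q}" using p0 q0 by (auto simp: f_def)
    show "card (f ` {0..<n}) = card ({0..<p} \<times> {0..<q})"
      using inj by (simp add: card_image card_cartesian_product n)
  qed simp
  have equiv: "(coprime x n \<and> [x^N = x] (mod n)) \<longleftrightarrow>
      (fst (f x) \<in> Sp \<and> snd (f x) \<in> Sq)" for x
  proof -
    have "[x^N = x] (mod n) \<longleftrightarrow> [x^N = x] (mod p) \<and> [x^N = x] (mod q)"
      using cop n by (metis coprime_cong_mult_nat cong_modulus_mult_nat mult.commute)
    then show ?thesis using p0 q0
      by (auto simp: f_def Sp_def Sq_def n cong_mod_iff cong_mod_iff2 coprime_mod_left_iff)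
  qed
  have "f ` Sn = Sp \<times> Sq"
  proof -
    have "f ` Sn = {z \<in> f ` {0..<n}. fst z \<in> Sp \<and> snd z \<in> Sq}"
      unfolding Sn_def using equiv by auto
    also have "\<dots> = Sp \<times> Sq" unfolding img by (auto simp: Sp_def Sq_def)
    finally show ?thesis .
  qed
  moreover have "inj_on f Sn" using inj by (rule inj_on_subset) (auto simp: Sn_def)
  ultimately have "card Sn = card (Sp \<times> Sq)" by (metis card_image)
  then show ?thesis by (simp add: Sn_def Sp_def Sq_def card_cartesian_product)
qed



lemma P_add:
  assumes "[x^(e^a) = x] (mod n)" "[x^(e^b) = x] (mod n)"
  shows "[(x::nat)^(e^(a+b)) = x] (mod n)"
proof -
  have "x^(e^(a+b)) = (x^(e^a))^(e^b)" by (simp add: power_add power_mult)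
  moreover have "[(x^(e^a))^(e^b) = x^(e^b)] (mod n)" using assms(1) by (rule cong_pow)
  ultimately show ?thesis using assms(2) by (metis cong_trans)
qed

lemma P_sub:
  assumes "[x^(e^a) = x] (mod n)" "[x^(e^b) = x] (mod n)" "a \<le> b"
  shows "[(x::nat)^(e^(b-a)) = x] (mod n)"
proof -
  have "x^(e^b) = (x^(e^a))^(e^(b-a))" using assms(3)
    by (metis le_add_diff_inverse power_add power_mult)
  moreover have "[(x^(e^a))^(e^(b-a)) = x^(e^(b-a))] (mod n)" using assms(1) by (rule cong_pow)
  ultimately show ?thesis using assms(2) by (metis cong_sym cong_trans)
qed

lemma P_mult:
  assumes "[x^(e^r) = x] (mod n)"
  shows "[(x::nat)^(e^(r*j)) = x] (mod n)"
proof (induction j)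
  case 0 then show ?case by simp
next
  case (Suc j)
  have "r * Suc j = r * j + r" by simp
  then show ?case using P_add[OF Suc.IH assms] by (simp add: add.commute)
qed

lemma P_dvd:
  assumes r: "r > 0" "[x^(e^r) = x] (mod n)" "\<forall>m. 0 < m \<and> m < r \<longrightarrow> \<not> [x^(e^m) = x] (mod n)"
  shows "m > 0 \<Longrightarrow> [(x::nat)^(e^m) = x] (mod n) \<Longrightarrow> r dvd m"
proof (induction m rule: less_induct)
  case (less m)
  show ?case
  proof (cases "m = r")
    case True then show ?thesis by simp
  next
    case False
    with less.prems assms(3) have "r < m" by auto
    then have "[x^(e^(m-r)) = x] (mod n)" using P_sub[OF assms(2) less.prems(2)] by simp
    then have "r dvd (m - r)" using less.IH[of "m-r"] \<open>r < m\<close> r(1) by simp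
    then show ?thesis using \<open>r < m\<close> by (metis dvd_minus_self le_add_diff_inverse less_imp_le dvd_add_right_iff dvd_refl)
  qed
qed

lemma fix_decomp:
  assumes d: "d > 0"
  shows "{x \<in> {0..<n}. coprime x n \<and> [x^(e^d) = x] (mod n)} = (\<Union>r\<in>{r. r dvd d}. T_set n e r)"
proof (intro equalityI subsetI)
  fix x assume x: "x \<in> {x \<in> {0..<n}. coprime x n \<and> [x^(e^d) = x] (mod n)}"
  define r where "r = (LEAST m. 0 < m \<and> [x^(e^m) = x] (mod n))"
  have ex: "0 < d \<and> [x^(e^d) = x] (mod n)" using x d by auto
  have r1: "0 < r \<and> [x^(e^r) = x] (mod n)" unfolding r_def by (rule LeastI[of _ d]) (rule ex)
  have r2: "\<forall>m. 0 < m \<and> m < r \<longrightarrow> \<not> [x^(e^m) = x] (mod n)"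
    unfolding r_def using not_less_Least by blast
  have "r dvd d" using P_dvd[of r x e n d] r1 r2 ex by blast
  moreover have "x \<in> T_set n e r" using x r1 r2 by (auto simp: T_set_def)
  ultimately show "x \<in> (\<Union>r\<in>{r. r dvd d}. T_set n e r)" by blast
next
  fix x assume "x \<in> (\<Union>r\<in>{r. r dvd d}. T_set n e r)"
  then obtain r where r: "r dvd d" "x \<in> T_set n e r" by blast
  then obtain j where "d = r * j" by (auto elim: dvdE)
  then show "x \<in> {x \<in> {0..<n}. coprime x n \<and> [x^(e^d) = x] (mod n)}"
    using r P_mult[of x e r n j] by (auto simp: T_set_def)
qed

lemma T_disj:
  assumes "r > 0" "r' > 0" "r \<noteq> r'"
  shows "T_set n e r \<inter> T_set n e r' = {}"
  using assms by (auto simp: T_set_def) (metis linorder_neqE_nat)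

lemma fix_sum:
  assumes d: "d > 0"
  shows "card {x \<in> {0..<n}. coprime x n \<and> [x^(e^d) = x] (mod n)} = (\<Sum>r | r dvd d. card (T_set n e r))"
  unfolding fix_decomp[OF d]
proof (rule card_UN_disjoint)
  show "finite {r. r dvd d}" using d by simp
  show "\<forall>i\<in>{r. r dvd d}. finite (T_set n e i)" by (auto simp: T_set_def)
  show "\<forall>i\<in>{r. r dvd d}. \<forall>j\<in>{r. r dvd d}. i \<noteq> j \<longrightarrow> T_set n e i \<inter> T_set n e j = {}"
  proof (intro ballI impI)
    fix i j assume "i \<in> {r. r dvd d}" "j \<in> {r. r dvd d}" "i \<noteq> j"
    then have "i > 0" "j > 0" using d by (auto intro: Nat.gr0I)
    then show "T_set n e i \<inter> T_set n e j = {}" using T_disj \<open>i \<noteq> j\<close> by blast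
  qed
qed

theorem theorem1:
  fixes p q n e k :: nat
  assumes "prime p" and "prime q" and "p \<noteq> q" and "n = p * q"
    and "e > 0" and "coprime e (totient n)" and "k > 0"
  shows "int (card (T_set n e k)) =
    (\<Sum>d | d dvd k. moebius_mu (k div d) * int (gcd (e ^ d - 1) (p - 1)) * int (gcd (e ^ d - 1) (q - 1)))"
proof -
  define g where "g r = int (card (T_set n e r))" for r
  define F where "F d = int (card {x \<in> {0..<n}. coprime x n \<and> [x^(e^d) = x] (mod n)})" for d
  have FF: "F d = (\<Sum>r | r dvd d. g r)" if "d > 0" for d
    unfolding F_def g_def fix_sum[OF that] by (simp only: of_nat_sum)
  have Fv: "F d = int (gcd (e ^ d - 1) (p - 1)) * int (gcd (e ^ d - 1) (q - 1))" for d
  proof -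
    have N: "e ^ d > 0" using assms(5) by simp
    show ?thesis unfolding F_def crt_count[OF assms(1-4)]
      prime_count[OF assms(1) N] prime_count[OF assms(2) N] by (simp only: of_nat_mult)
  qed
  have "g k = (\<Sum>d | d dvd k. moebius_mu (k div d) * F d)"
    using mobius_inversion[where F=F and g=g and k=k, OF FF assms(7)] by (rule sym)
  also have "\<dots> = (\<Sum>d | d dvd k. moebius_mu (k div d) * int (gcd (e ^ d - 1) (p - 1)) * int (gcd (e ^ d - 1) (q - 1)))"
    by (rule sum.cong) (simp_all only: Fv mult.assoc)
  finally show ?thesis by (simp add: g_def)
qed

end
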